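(* Let $m\ge1$ and let $Q=(q_{ij})_{0\le i,j\le m}$ be the matrix with $q_{00}=\alpha_{00}-\alpha_0-\sum_{j=1}^m\beta_{0j}$; $q_{i0}=\alpha_{0i}+2\beta_{0i}$ and $q_{0i}=\alpha_{i0}$ for $1\le i\le m$; $q_{ij}=\alpha_{ji}$ for $1\le i\ne j\le m$; $q_{ii}=\alpha_{ii}-\alpha_i-\sum_{j\in\{0,\dots,m\},j\ne i}\alpha_{ij}$ for $1\le i\le m$, where all $\alpha$'s and $\beta$'s are nonnegative. If the Perron–Frobenius eigenvalue $\lambda_1$ of $Q$ (the real eigenvalue with $\operatorname{Re}\lambda<\lambda_1$ for all other eigenvalues $\lambda$) is algebraically simple and $u$ is the corresponding nonnegative right eigenvector with $e^Tu=1$, then every solution of $dx/dt=Qx-x(e^TQx)$ on the simplex $\{x\ge 0,\ e^Tx=1\}$ whose initial condition has nonzero coefficient on $u$ in the decomposition of $\mathbb{R}^{m+1}$ into generalized eigenspaces of $Q$ converges to $u$; in particular this frequency equation has one and only one stable fixed point and no stable limit cycle.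
   Context: $e=(1,\dots,1)^T$. $Q$ is the linear-mean-dynamics matrix of the multi-phenotype cancer model (CSC index 0, $\mathrm{NSCC}_1,\dots,\mathrm{NSCC}_m$) extended by symmetric differentiation CSC $\to\mathrm{NSCC}_j+\mathrm{NSCC}_j$ at rate $\beta_{0j}$. *)

theory Defs
  imports Complex_Main "Jordan_Normal_Form.Jordan_Normal_Form"
begin

text \<open>Indices 0..m: index 0 is the CSC, indices 1..m are NSCC_1..NSCC_m.
  alpha i j = alpha_{ij}, alphad i = alpha_i, beta j = beta_{0j}.\<close>

definition Q_entry :: "nat \<Rightarrow> (nat \<Rightarrow> nat \<Rightarrow> real) \<Rightarrow> (nat \<Rightarrow> real) \<Rightarrow> (nat \<Rightarrow> real)
    \<Rightarrow> nat \<Rightarrow> nat \<Rightarrow> real" where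
  "Q_entry m alpha alphad beta i j =
     (if i = 0 \<and> j = 0 then alpha 0 0 - alphad 0 - (\<Sum>k=1..m. beta k)
      else if j = 0 then alpha 0 i + 2 * beta i
      else if i = 0 then alpha j 0
      else if i \<noteq> j then alpha j i
      else alpha i i - alphad i - (\<Sum>k\<in>{0..m} - {i}. alpha i k))"

definition Q_mat :: "nat \<Rightarrow> (nat \<Rightarrow> nat \<Rightarrow> real) \<Rightarrow> (nat \<Rightarrow> real) \<Rightarrow> (nat \<Rightarrow> real) \<Rightarrow> real mat" where
  "Q_mat m alpha alphad beta = mat (m+1) (m+1) (\<lambda>(i,j). Q_entry m alpha alphad beta i j)"

definition gen_eigenspace :: "complex mat \<Rightarrow> complex \<Rightarrow> complex vec set" where
  "gen_eigenspace A lam = {v \<in> carrier_vec (dim_row A).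
     (char_matrix A lam ^\<^sub>m dim_row A) *\<^sub>v v = 0\<^sub>v (dim_row A)}"

text \<open>Component of x0 on the generalized eigenspace of lam is nonzero, i.e. in every
  decomposition of x0 as sum over the eigenvalues of vectors in the respective generalized
  eigenspaces (which is unique), the lam-summand is nonzero.\<close>
definition nonzero_gen_component :: "complex mat \<Rightarrow> complex \<Rightarrow> complex vec \<Rightarrow> bool" where
  "nonzero_gen_component A lam x0 =
     (\<forall>w :: complex \<Rightarrow> complex vec.
        (\<forall>mu\<in>Collect (eigenvalue A). w mu \<in> gen_eigenspace A mu) \<and>
        (\<forall>i < dim_row A. (\<Sum>mu\<in>Collect (eigenvalue A). w mu $ i) = x0 $ i)
        \<longrightarrow> w lam \<noteq> 0\<^sub>v (dim_row A))"

end

theory Submission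
  imports Defs "HOL-Real_Asymp.Real_Asymp" "Jordan_Normal_Form.Jordan_Normal_Form_Existence"
begin

hide_const (open) Coset.order



lemma cmod_sq_deriv:
  fixes y :: "real \<Rightarrow> complex"
  assumes "(y has_vector_derivative y') (at t within S)"
  shows "((\<lambda>t. (cmod (y t))\<^sup>2) has_real_derivative (2 * Re (y' * cnj (y t)))) (at t within S)"
proof -
  have eq: "(\<lambda>t. (cmod (y t))\<^sup>2) = (\<lambda>t. Re (y t * cnj (y t)))"
    by (rule ext) (simp add: complex_mult_cnj cmod_def)
  have "((\<lambda>t. y t * cnj (y t)) has_vector_derivative (y t * cnj y' + y' * cnj (y t))) (at t within S)"
    by (intro has_vector_derivative_mult has_vector_derivative_cnj assms)
  from bounded_linear.has_vector_derivative[OF bounded_linear_Re this]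
  have "((\<lambda>t. Re (y t * cnj (y t))) has_vector_derivative Re (y t * cnj y' + y' * cnj (y t))) (at t within S)" .
  moreover have "Re (y t * cnj y' + y' * cnj (y t)) = 2 * Re (y' * cnj (y t))"
    by (simp add: algebra_simps)
  ultimately show ?thesis unfolding eq has_real_derivative_iff_has_vector_derivative by simp
qed




lemma mono_from_deriv:
  fixes U :: "real \<Rightarrow> real"
  assumes "a \<le> b"
  and "\<And>x. a \<le> x \<Longrightarrow> x \<le> b \<Longrightarrow> (U has_real_derivative U' x) (at x)"
  and "\<And>x. a \<le> x \<Longrightarrow> x \<le> b \<Longrightarrow> U' x \<le> 0"
  shows "U b \<le> U a"
proof (rule DERIV_nonpos_imp_decreasing_open[OF assms(1)])
  show "\<And>x. a < x \<Longrightarrow> x < b \<Longrightarrow> \<exists>y. (U has_real_derivative y) (at x) \<and> y \<le> 0"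
    using assms by force
  show "continuous_on {a..b} U"
    by (rule continuous_at_imp_continuous_on) (use assms DERIV_isCont in force)
qed

lemma decay:
  fixes q f :: "real \<Rightarrow> complex" and a :: complex and T0 :: real
  assumes ra: "Re a < 0"
  and der: "\<And>t. t > T0 \<Longrightarrow> (q has_vector_derivative (a * q t + f t)) (at t)"
  and lim: "(f \<longlongrightarrow> 0) at_top"
  shows "(q \<longlongrightarrow> 0) at_top"
proof (rule tendstoI)
  fix e :: real assume e: "e > 0"
  define c where "c = - Re a"
  have c: "c > 0" using ra c_def by simp
  define \<eta> where "\<eta> = c * e / 2"
  have eta: "\<eta> > 0" unfolding \<eta>_def using c e by simp
  from tendstoD[OF lim eta] obtain N where N: "\<And>t. t \<ge> N \<Longrightarrow> cmod (f t) < \<eta>"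
    by (auto simp: eventually_at_top_linorder dist_norm)
  define T1 where "T1 = max N (T0 + 1)"
  define R2 where "R2 = (e/2)\<^sup>2"
  define V where "V = (\<lambda>t. (cmod (q t))\<^sup>2)"
  define U where "U = (\<lambda>t. (V t - R2) * exp (c * t))"
  define V' where "V' = (\<lambda>t. 2 * Re ((a * q t + f t) * cnj (q t)))"
  have dV: "(V has_real_derivative V' t) (at t)" if "t > T0" for t
    unfolding V_def V'_def by (rule cmod_sq_deriv[OF der[OF that]])
  have dU: "(U has_real_derivative ((V' t + c * (V t - R2)) * exp (c * t))) (at t)" if "t > T0" for t
    unfolding U_def
    by (rule derivative_eq_intros dV[OF that] refl | simp)+ (simp add: algebra_simps)
  have key: "V' t + c * (V t - R2) \<le> 0" if "t \<ge> T1" for t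
  proof -
    have ft: "cmod (f t) \<le> \<eta>" using N[of t] that T1_def by force
    have r1: "Re (a * q t * cnj (q t)) = Re a * (cmod (q t))\<^sup>2"
      unfolding cmod_power2 by (simp add: algebra_simps power2_eq_square)
    have r2: "Re (f t * cnj (q t)) \<le> \<eta> * cmod (q t)"
    proof -
      have "Re (f t * cnj (q t)) \<le> cmod (f t * cnj (q t))" by (rule complex_Re_le_cmod)
      also have "\<dots> = cmod (f t) * cmod (q t)" by (simp add: norm_mult)
      also have "\<dots> \<le> \<eta> * cmod (q t)" by (rule mult_right_mono[OF ft]) simp
      finally show ?thesis .
    qed
    define s where "s = cmod (q t)"
    define rf where "rf = Re (f t * cnj (q t))"
    have "V' t = 2 * Re a * s\<^sup>2 + 2 * rf"
      unfolding V'_def s_def rf_def using r1 by (simp only: distrib_right plus_complex.sel) (simp add: algebra_simps)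
    moreover have "V t = s\<^sup>2" unfolding V_def s_def ..
    moreover have "Re a = - c" unfolding c_def by simp
    moreover have "rf \<le> \<eta> * s" using r2 unfolding rf_def s_def .
    ultimately have "V' t + c * (V t - R2) \<le> - c * (cmod (q t))\<^sup>2 + 2 * \<eta> * cmod (q t) - c * R2"
      unfolding s_def by (simp add: algebra_simps)
    also have "\<dots> = - (c * cmod (q t) - \<eta>)\<^sup>2 / c"
      using c unfolding R2_def \<eta>_def by (simp add: field_simps power2_eq_square)
    also have "\<dots> \<le> 0" using c by simp
    finally show ?thesis .
  qed
  have bound: "V t \<le> R2 + V T1 * exp (c * (T1 - t))" if "t \<ge> T1" for t
  proof -
    have "U t \<le> U T1"
      by (rule mono_from_deriv[OF that, where U' = "\<lambda>t. (V' t + c * (V t - R2)) * exp (c * t)"])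
        (use dU key T1_def in \<open>auto intro!: mult_nonpos_nonneg\<close>)
    hence "(V t - R2) * exp (c * t) \<le> (V T1 - R2) * exp (c * T1)" unfolding U_def .
    hence "V t - R2 \<le> (V T1 - R2) * exp (c * T1) / exp (c * t)" by (simp add: pos_le_divide_eq)
    also have "\<dots> = (V T1 - R2) * exp (c * (T1 - t))" by (simp add: exp_diff right_diff_distrib)
    also have "\<dots> \<le> V T1 * exp (c * (T1 - t))"
      by (rule mult_right_mono) (auto simp: R2_def)
    finally show ?thesis by simp
  qed
  have "((\<lambda>t. V T1 * exp (c * (T1 - t))) \<longlongrightarrow> 0) at_top"
    using c by real_asymp
  hence ev: "eventually (\<lambda>t. V T1 * exp (c * (T1 - t)) < e\<^sup>2 / 2) at_top"
    by (rule order_tendstoD) (use e in simp)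
  moreover have "eventually (\<lambda>t. t \<ge> T1) at_top" by simp
  ultimately show "eventually (\<lambda>t. dist (q t) 0 < e) at_top"
  proof eventually_elim
    case (elim t)
    have e2: "e\<^sup>2 > 0" using e by simp
    have R: "R2 = e\<^sup>2 / 4" unfolding R2_def by (simp add: power_divide)
    have "V t < e\<^sup>2" using bound[OF elim(2)] elim(1) e2 R by linarith
    hence "(cmod (q t))\<^sup>2 < e\<^sup>2" unfolding V_def .
    hence "cmod (q t) < e" using e by (simp add: power_less_imp_less_base)
    thus ?case by simp
  qed
qed




lemma nonvanish:
  fixes y :: "real \<Rightarrow> complex" and g :: "real \<Rightarrow> real"
  assumes der: "\<And>t. t \<ge> 0 \<Longrightarrow> (y has_vector_derivative (of_real (g t) * y t)) (at t within {0..})"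
  and gb: "\<And>t. t \<ge> 0 \<Longrightarrow> \<bar>g t\<bar> \<le> K" and y0: "y 0 \<noteq> 0" and t: "t \<ge> 0"
  shows "y t \<noteq> 0"
proof -
  define V where "V = (\<lambda>t. (cmod (y t))\<^sup>2)"
  define W where "W = (\<lambda>t. V t * exp (2 * K * t))"
  have dV: "(V has_real_derivative (2 * g s * V s)) (at s within {0..})" if "s \<ge> 0" for s
  proof -
    have "(V has_real_derivative (2 * Re (of_real (g s) * y s * cnj (y s)))) (at s within {0..})"
      unfolding V_def by (rule cmod_sq_deriv[OF der[OF that]])
    moreover have "Re (of_real (g s) * y s * cnj (y s)) = g s * V s"
      unfolding V_def cmod_power2 by (simp add: algebra_simps power2_eq_square)
    ultimately show ?thesis by (metis mult.assoc)
  qed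
  have dW: "(W has_real_derivative ((2 * g s * V s + 2 * K * V s) * exp (2 * K * s))) (at s within {0..})"
    if "s \<ge> 0" for s
    unfolding W_def
    by (rule derivative_eq_intros dV[OF that] refl | simp)+ (simp add: algebra_simps)
  have "W 0 \<le> W t"
  proof (rule DERIV_nonneg_imp_increasing_open[OF t])
    fix s assume s: "0 < s" "s < t"
    have "at s within {0..} = at s" by (rule at_within_open_subset[of s "{0<..}"]) (use s in auto)
    hence "(W has_real_derivative ((2 * g s * V s + 2 * K * V s) * exp (2 * K * s))) (at s)"
      using dW[of s] s by simp
    moreover have "(2 * g s * V s + 2 * K * V s) * exp (2 * K * s) \<ge> 0"
    proof -
      have "V s \<ge> 0" unfolding V_def by simp
      moreover have "g s + K \<ge> 0" using gb[of s] s by linarith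
      ultimately have "2 * g s * V s + 2 * K * V s \<ge> 0"
        by (metis distrib_right mult.assoc mult_nonneg_nonneg zero_le_numeral distrib_left)
      thus ?thesis by simp
    qed
    ultimately show "\<exists>y. (W has_real_derivative y) (at s) \<and> y \<ge> 0" by blast
  next
    show "continuous_on {0..t} W"
      unfolding continuous_on_eq_continuous_within
    proof
      fix s assume s: "s \<in> {0..t}"
      hence s0: "s \<ge> 0" by simp
      have "(W has_real_derivative ((2 * g s * V s + 2 * K * V s) * exp (2 * K * s))) (at s within {0..t})"
        by (rule has_field_derivative_subset[OF dW[OF s0]]) auto
      thus "continuous (at s within {0..t}) W" by (rule DERIV_continuous)
    qed
  qed
  moreover have "W 0 > 0" unfolding W_def V_def using y0 by simp
  ultimately have "W t > 0" by linarith
  thus ?thesis unfolding W_def V_def by auto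
qed




lemma similar_mat_wit_char_matrix': assumes wit: "similar_mat_wit A B P Q"
  shows "similar_mat_wit (char_matrix A ev) (char_matrix B ev) P Q"
proof -
  define n where "n = dim_row A"
  let ?C = "carrier_mat n n"
  from similar_mat_witD[OF refl wit, folded n_def] have
    A: "A \<in> ?C" and B: "B \<in> ?C" and P: "P \<in> ?C" and Q: "Q \<in> ?C"
    and PQ: "P * Q = 1\<^sub>m n" and QP: "Q * P = 1\<^sub>m n"
    and AB: "A = P * B * Q"
    by auto
  have "char_matrix A ev = (P * B * Q + (-ev) \<cdot>\<^sub>m (P * Q))"
    unfolding char_matrix_def n_def[symmetric] unfolding AB PQ 
    by (intro eq_matI, insert P B Q, auto)
  also have "(-ev) \<cdot>\<^sub>m (P * Q) = P * ((-ev) \<cdot>\<^sub>m 1\<^sub>m n) * Q" using P Q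
    by (metis mult_smult_assoc_mat mult_smult_distrib one_carrier_mat right_mult_one_mat)
  also have "P * B * Q + \<dots> = (P * B + P * ((-ev) \<cdot>\<^sub>m 1\<^sub>m n)) * Q" using P B
    by (intro add_mult_distrib_mat[symmetric, OF _ _ Q, of _ n], auto)
  also have "P * B + P * ((-ev) \<cdot>\<^sub>m 1\<^sub>m n) = P * (B  + (-ev) \<cdot>\<^sub>m 1\<^sub>m n)"
    by (intro mult_add_distrib_mat[symmetric, OF P B], auto)
  also have "(B  + (-ev) \<cdot>\<^sub>m 1\<^sub>m n) = char_matrix B ev" unfolding char_matrix_def
    by (intro eq_matI, insert B, auto)
  finally have AB: "char_matrix A ev = P * char_matrix B ev * Q" .
  show "similar_mat_wit (char_matrix A ev) (char_matrix B ev) P Q"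
    by (intro similar_mat_witI[OF PQ QP AB _ _ P Q], insert A B, auto)
qed


lemma jordan_bidiag:
  "\<forall>i j. i < sum_list (map fst n_as) \<longrightarrow> j < sum_list (map fst n_as) \<longrightarrow>
     jordan_matrix n_as $$ (i,j) \<noteq> 0 \<longrightarrow> (j = i \<or> j = Suc i \<and> jordan_matrix n_as $$ (i,i) = jordan_matrix n_as $$ (j,j))"
proof (induct n_as)
  case Nil
  then show ?case by simp
next
  case (Cons ka n_as)
  obtain k a where ka: "ka = (k,a)" by force
  let ?N = "sum_list (map fst n_as)"
  show ?case
  proof (intro allI impI)
    fix i j assume i: "i < sum_list (map fst (ka # n_as))" and j: "j < sum_list (map fst (ka # n_as))"
      and nz: "jordan_matrix (ka # n_as) $$ (i, j) \<noteq> 0"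
    have iN: "i < k + ?N" and jN: "j < k + ?N" using i j ka by auto
    have idx: "\<And>i j. i < k + ?N \<Longrightarrow> j < k + ?N \<Longrightarrow> jordan_matrix (ka # n_as) $$ (i,j) =
       (if i < k then if j < k then jordan_block k a $$ (i,j) else 0
        else if j < k then 0 else jordan_matrix n_as $$ (i - k, j - k))"
      unfolding ka jordan_matrix_Cons by (subst index_mat_four_block) auto
    show "j = i \<or> j = Suc i \<and> jordan_matrix (ka # n_as) $$ (i, i) = jordan_matrix (ka # n_as) $$ (j, j)"
    proof (cases "i < k")
      case True
      with nz idx[OF iN jN] have "j < k" by (auto split: if_splits)
      with True nz idx[OF iN jN] idx[OF iN iN] idx[OF jN jN] show ?thesis
        by (auto split: if_splits)
    next
      case False
      with nz idx[OF iN jN] have jk: "\<not> j < k" by (auto split: if_splits)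
      have "jordan_matrix n_as $$ (i - k, j - k) \<noteq> 0" using nz idx[OF iN jN] False jk by simp
      with Cons[rule_format, of "i - k" "j - k"] iN jN False jk
      have "j - k = i - k \<or> j - k = Suc (i - k) \<and> jordan_matrix n_as $$ (i - k, i - k) = jordan_matrix n_as $$ (j - k, j - k)"
        by auto
      with False jk idx[OF iN iN] idx[OF jN jN] show ?thesis by auto
    qed
  qed
qed

lemma order_prod_linear:
  fixes a :: "'a :: idom"
  shows "order a (\<Prod>b\<leftarrow>bs. [:-b,1:]) = length (filter ((=) a) bs)"
proof (induct bs)
  case Nil
  then show ?case by (simp add: order_0I)
next
  case (Cons b bs)
  have p1: "[:-b,1:] \<noteq> (0 :: 'a poly)" by simp
  have p2: "(\<Prod>b\<leftarrow>bs. [:-b,1:]) \<noteq> (0 :: 'a poly)" by (auto simp: prod_list_zero_iff)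
  have nz: "[:-b,1:] * (\<Prod>b\<leftarrow>bs. [:-b,1:]) \<noteq> 0"
    by (metis mult_eq_0_iff p1 p2)
  have o1: "order a [:-b,1:] = (if a = b then 1 else 0)"
  proof (cases "a = b")
    case True thus ?thesis using order_power_n_n[of a 1] by simp
  next
    case False thus ?thesis by (simp add: order_0I)
  qed
  show ?case using order_mult[OF nz, of a] o1 Cons by simp
qed

lemma bidiag_sum:
  fixes J :: "'a :: comm_ring_1 mat"
  assumes bd: "\<And>r s. r < n \<Longrightarrow> s < n \<Longrightarrow> J $$ (r,s) \<noteq> 0 \<Longrightarrow> s = r \<or> s = Suc r"
  and r: "r < n"
  shows "(\<Sum>s\<in>{0..<n}. J $$ (r,s) * z s) = J $$ (r,r) * z r + (if Suc r < n then J $$ (r,Suc r) * z (Suc r) else 0)"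
proof -
  have "(\<Sum>s\<in>{0..<n}. J $$ (r,s) * z s) =
     (\<Sum>s\<in>{0..<n}. (if s = r then J $$ (r,r) * z r else 0) + (if s = Suc r then J $$ (r,Suc r) * z (Suc r) else 0))"
  proof (rule sum.cong[OF refl])
    fix s assume "s \<in> {0..<n}"
    hence s: "s < n" by simp
    show "J $$ (r,s) * z s = (if s = r then J $$ (r,r) * z r else 0) + (if s = Suc r then J $$ (r,Suc r) * z (Suc r) else 0)"
      using bd[OF r s] by (cases "J $$ (r,s) = 0") auto
  qed
  also have "\<dots> = J $$ (r,r) * z r + (if Suc r < n then J $$ (r,Suc r) * z (Suc r) else 0)"
    unfolding sum.distrib using r by (simp add: sum.delta')
  finally show ?thesis .
qed

lemma down_induct:
  assumes step: "\<And>r. r < n \<Longrightarrow> r \<noteq> p \<Longrightarrow> (Suc r < n \<Longrightarrow> Suc r \<noteq> p \<Longrightarrow> P (Suc r)) \<Longrightarrow> P r"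
  shows "r < n \<Longrightarrow> r \<noteq> p \<Longrightarrow> P r"
proof (induct "n - r" arbitrary: r rule: less_induct)
  case less
  show ?case
  proof (rule step[OF less(2,3)])
    assume "Suc r < n" "Suc r \<noteq> p"
    thus "P (Suc r)" using less(1)[of "Suc r"] by auto
  qed
qed




lemma poly_prod_linear_root:
  fixes x :: "'a :: idom"
  shows "x \<in> set as \<Longrightarrow> poly (\<Prod>a\<leftarrow>as. [:-a,1:]) x = 0"
  by (induct as) auto

lemma quot_deriv:
  fixes a b :: "real \<Rightarrow> 'a :: real_normed_field"
  assumes da: "(a has_vector_derivative a') (at t)" and db: "(b has_vector_derivative b') (at t)"
  and bt: "b t \<noteq> 0"
  shows "((\<lambda>s. a s / b s) has_vector_derivative ((a' * b t - a t * b') / (b t)\<^sup>2)) (at t)"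
proof -
  have "((\<lambda>s. inverse (b s)) has_derivative (\<lambda>h. - (inverse (b t) * (h *\<^sub>R b') * inverse (b t)))) (at t)"
    by (rule has_derivative_inverse[OF bt db[unfolded has_vector_derivative_def]])
  hence dib: "((\<lambda>s. inverse (b s)) has_vector_derivative (- (inverse (b t) * b' * inverse (b t)))) (at t)"
    unfolding has_vector_derivative_def
    by (rule has_derivative_eq_rhs) (auto simp: fun_eq_iff algebra_simps scaleR_conv_of_real)
  have "((\<lambda>s. a s * inverse (b s)) has_vector_derivative
      (a t * (- (inverse (b t) * b' * inverse (b t))) + a' * inverse (b t))) (at t)"
    by (rule has_vector_derivative_mult[OF da dib])
  moreover have "a t * (- (inverse (b t) * b' * inverse (b t))) + a' * inverse (b t) = (a' * b t - a t * b') / (b t)\<^sup>2"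
    using bt by (simp add: field_simps power2_eq_square)
  ultimately show ?thesis by (simp add: divide_inverse)
qed

lemma mv_sum:
  assumes "A \<in> carrier_mat n n" "w \<in> carrier_vec n" "i < n"
  shows "(A *\<^sub>v w) $ i = (\<Sum>j\<in>{0..<n}. A $$ (i,j) * w $ j)"
  using assms by (auto simp: scalar_prod_def intro!: sum.cong)

lemma nil_support:
  fixes J :: "'a::field mat"
  assumes Jc: "J \<in> carrier_mat n n"
  and bd: "\<And>i j. i<n \<Longrightarrow> j<n \<Longrightarrow> J $$ (i,j) \<noteq> 0 \<Longrightarrow> j = i \<or> j = Suc i \<and> J$$(i,i) = J$$(j,j)"
  shows "z \<in> carrier_vec n \<Longrightarrow> (\<forall>s<n. z$s \<noteq> 0 \<longrightarrow> J$$(s,s) = \<mu> \<and> s < k) \<Longrightarrow>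
    s < n \<Longrightarrow> ((char_matrix J \<mu> ^\<^sub>m j) *\<^sub>v z) $ s \<noteq> 0 \<Longrightarrow> J$$(s,s) = \<mu> \<and> s + j < k"
proof (induct j arbitrary: z k s)
  case 0
  have "char_matrix J \<mu> \<in> carrier_mat n n" using Jc by simp
  hence "(char_matrix J \<mu> ^\<^sub>m 0) = 1\<^sub>m n" by simp
  with 0 show ?case by simp
next
  case (Suc j)
  define N where "N = char_matrix J \<mu>"
  have Nc: "N \<in> carrier_mat n n" unfolding N_def using Jc by simp
  have Nij: "\<And>i j. i < n \<Longrightarrow> j < n \<Longrightarrow> N $$ (i,j) = J $$ (i,j) - (if i = j then \<mu> else 0)"
    unfolding N_def char_matrix_def using Jc by auto
  have bdN: "\<And>i j. i<n \<Longrightarrow> j<n \<Longrightarrow> N $$ (i,j) \<noteq> 0 \<Longrightarrow> j = i \<or> j = Suc i"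
  proof -
    fix i j assume "i < n" "j < n" "N $$ (i,j) \<noteq> 0"
    thus "j = i \<or> j = Suc i" using bd[of i j] Nij[of i j] by (cases "i = j") auto
  qed
  define z' where "z' = N *\<^sub>v z"
  have z'c: "z' \<in> carrier_vec n" unfolding z'_def using Nc Suc(2) by simp
  have z'supp: "\<forall>s<n. z'$s \<noteq> 0 \<longrightarrow> J$$(s,s) = \<mu> \<and> s < k - 1"
  proof (intro allI impI)
    fix s assume s: "s < n" and nz: "z' $ s \<noteq> 0"
    have "z' $ s = (\<Sum>t\<in>{0..<n}. N $$ (s,t) * z $ t)"
      unfolding z'_def by (rule mv_sum[OF Nc Suc(2) s])
    also have "\<dots> = N $$ (s,s) * z $ s + (if Suc s < n then N $$ (s,Suc s) * z $ (Suc s) else 0)"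
      by (rule bidiag_sum[OF bdN s])
    finally have eq: "z' $ s = N $$ (s,s) * z $ s + (if Suc s < n then N $$ (s,Suc s) * z $ (Suc s) else 0)" .
    have first: "N $$ (s,s) * z $ s = 0"
      using Suc(3) s Nij[OF s s] by (cases "z $ s = 0") auto
    from nz eq first have sn: "Suc s < n" and ne: "N $$ (s,Suc s) \<noteq> 0" and zs: "z $ Suc s \<noteq> 0"
      by (auto split: if_splits)
    have "J $$ (s, Suc s) \<noteq> 0" using ne Nij[OF s sn] by simp
    hence "J $$ (s,s) = J $$ (Suc s, Suc s)" using bd[OF s sn] by auto
    moreover have "J $$ (Suc s, Suc s) = \<mu> \<and> Suc s < k" using Suc(3) sn zs by auto
    ultimately show "J$$(s,s) = \<mu> \<and> s < k - 1" by auto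
  qed
  have "(char_matrix J \<mu> ^\<^sub>m Suc j) *\<^sub>v z = (N ^\<^sub>m j) *\<^sub>v z'"
    unfolding z'_def using assoc_mult_mat_vec[of "N ^\<^sub>m j" n n N n z] Nc Suc(2) by (simp add: N_def)
  with Suc(5) have "((N ^\<^sub>m j) *\<^sub>v z') $ s \<noteq> 0" by simp
  from Suc(1)[OF z'c z'supp Suc(4) this[unfolded N_def]]
  show ?case by auto
qed






theorem mainTheorem6:
  fixes m :: nat
    and alpha :: "nat \<Rightarrow> nat \<Rightarrow> real" and alphad beta :: "nat \<Rightarrow> real"
    and lam1 :: real and u :: "real vec" and x :: "real \<Rightarrow> nat \<Rightarrow> real"
  defines "Q \<equiv> Q_mat m alpha alphad beta"
  assumes m: "m \<ge> 1"
    and nonneg: "\<And>i j. alpha i j \<ge> 0" "\<And>i. alphad i \<ge> 0" "\<And>j. beta j \<ge> 0"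
    and pf_eig: "eigenvalue (map_mat complex_of_real Q) (complex_of_real lam1)"
    and pf_dom: "\<And>lam. eigenvalue (map_mat complex_of_real Q) lam \<Longrightarrow>
                   lam \<noteq> complex_of_real lam1 \<Longrightarrow> Re lam < lam1"
    and simple: "order (complex_of_real lam1) (char_poly (map_mat complex_of_real Q)) = 1"
    and u_dim: "u \<in> carrier_vec (m+1)"
    and u_nonneg: "\<And>i. i \<le> m \<Longrightarrow> u $ i \<ge> 0"
    and u_eig: "Q *\<^sub>v u = lam1 \<cdot>\<^sub>v u"
    and u_norm: "(\<Sum>i\<le>m. u $ i) = 1"
    and ode: "\<And>t i. t \<ge> 0 \<Longrightarrow> i \<le> m \<Longrightarrow>
       ((\<lambda>s. x s i) has_real_derivative
          ((\<Sum>j\<le>m. Q $$ (i,j) * x t j) - x t i * (\<Sum>k\<le>m. \<Sum>j\<le>m. Q $$ (k,j) * x t j)))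
       (at t within {0..})"
    and simplex: "\<And>t. t \<ge> 0 \<Longrightarrow> (\<forall>i\<le>m. x t i \<ge> 0) \<and> (\<Sum>i\<le>m. x t i) = 1"
    and init: "nonzero_gen_component (map_mat complex_of_real Q) (complex_of_real lam1)
                 (vec (m+1) (\<lambda>i. complex_of_real (x 0 i)))"
  shows "\<forall>i\<le>m. ((\<lambda>t. x t i) \<longlongrightarrow> u $ i) at_top"
proof -
  define n where "n = Suc m"
  have sumconv: "{..m} = {0..<n}" unfolding n_def by auto
  define Ac where "Ac = map_mat complex_of_real Q"
  define l1 where "l1 = complex_of_real lam1"
  have Qc: "Q \<in> carrier_mat n n" unfolding Q_def Q_mat_def n_def by simp
  have Acc: "Ac \<in> carrier_mat n n" unfolding Ac_def using Qc by simp
  have Acij: "\<And>i j. i<n \<Longrightarrow> j<n \<Longrightarrow> Ac $$ (i,j) = complex_of_real (Q $$ (i,j))"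
    unfolding Ac_def using Qc by simp
  obtain as where "char_poly Ac = (\<Prod>a\<leftarrow>as. [:- a, 1:])"
    using char_poly_factorized[OF Acc] by blast
  then obtain n_as where jnf: "jordan_nf Ac n_as" using jordan_nf_exists[OF Acc] by blast
  define J where "J = jordan_matrix n_as"
  from jnf have simJ: "similar_mat Ac J" unfolding jordan_nf_def J_def by simp
  then obtain P Qi where wit: "similar_mat_wit Ac J P Qi" unfolding similar_mat_def by blast
  note W = similar_mat_witD2[OF Acc wit]
  have PQ: "P * Qi = 1\<^sub>m n" and QP: "Qi * P = 1\<^sub>m n" and AJ: "Ac = P * J * Qi"
    and Jc: "J \<in> carrier_mat n n" and Pc: "P \<in> carrier_mat n n" and Qic: "Qi \<in> carrier_mat n n"
    using W by auto
  have dimJ: "sum_list (map fst n_as) = n" using Jc unfolding J_def carrier_mat_def by simp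
  have BD: "\<And>i j. i<n \<Longrightarrow> j<n \<Longrightarrow> J $$ (i,j) \<noteq> 0 \<Longrightarrow> j = i \<or> j = Suc i \<and> J$$(i,i) = J$$(j,j)"
    using jordan_bidiag[of n_as] unfolding dimJ J_def by blast
  have BD': "\<And>i j. i<n \<Longrightarrow> j<n \<Longrightarrow> J $$ (i,j) \<noteq> 0 \<Longrightarrow> j = i \<or> j = Suc i"
    using BD by blast
  define d where "d = (\<lambda>r. J $$ (r,r))"
  define e where "e = (\<lambda>r. if Suc r < n then J $$ (r, Suc r) else 0)"
  have bsum: "\<And>r z. r < n \<Longrightarrow> (\<Sum>s\<in>{0..<n}. J $$ (r,s) * z s) = d r * z r + e r * z (Suc r)"
  proof -
    fix r :: nat and z :: "nat \<Rightarrow> complex" assume r: "r < n"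
    have "(\<Sum>s\<in>{0..<n}. J $$ (r,s) * z s) = J $$ (r,r) * z r + (if Suc r < n then J $$ (r,Suc r) * z (Suc r) else 0)"
      by (rule bidiag_sum[of n J, OF BD' r])
    thus "(\<Sum>s\<in>{0..<n}. J $$ (r,s) * z s) = d r * z r + e r * z (Suc r)" unfolding d_def e_def by simp
  qed
  have echain: "\<And>r. r < n \<Longrightarrow> e r \<noteq> 0 \<Longrightarrow> Suc r < n \<and> d (Suc r) = d r"
  proof -
    fix r assume r: "r < n" and er: "e r \<noteq> 0"
    hence sr: "Suc r < n" and jn: "J $$ (r, Suc r) \<noteq> 0" unfolding e_def by (auto split: if_splits)
    from BD[OF r sr jn] show "Suc r < n \<and> d (Suc r) = d r" using sr unfolding d_def by auto
  qed
  have ut: "upper_triangular J"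
    unfolding upper_triangular_def J_def using jordan_matrix_upper_triangular[of _ n_as] by simp
  have diagJ: "diag_mat J = map d [0..<n]" unfolding diag_mat_def d_def using Jc by simp
  have cpA: "char_poly Ac = (\<Prod>a\<leftarrow>map d [0..<n]. [:-a,1:])"
    using char_poly_similar[OF simJ] char_poly_upper_triangular[OF Jc ut] diagJ by simp
  have card1: "card {i. i < n \<and> d i = l1} = 1"
  proof -
    have "order l1 (char_poly Ac) = length (filter ((=) l1) (map d [0..<n]))"
      unfolding cpA by (rule order_prod_linear)
    also have "\<dots> = card {i. i < n \<and> d i = l1}"
      unfolding length_filter_conv_card by (rule arg_cong[where f = card]) auto
    finally show ?thesis using simple unfolding l1_def Ac_def by simp
  qed
  then obtain p where pset: "{i. i < n \<and> d i = l1} = {p}" by (rule card_1_singletonE)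
  have p: "p < n" "d p = l1" using pset by auto
  have puniq: "\<And>r. r < n \<Longrightarrow> d r = l1 \<Longrightarrow> r = p" using pset by auto
  have eig: "\<And>r. r < n \<Longrightarrow> eigenvalue Ac (d r)"
    unfolding eigenvalue_root_char_poly[OF Acc] cpA by (rule poly_prod_linear_root) auto
  have Rdom: "\<And>r. r<n \<Longrightarrow> r \<noteq> p \<Longrightarrow> Re (d r) < lam1"
  proof -
    fix r assume r: "r < n" "r \<noteq> p"
    hence "d r \<noteq> l1" using puniq by blast
    thus "Re (d r) < lam1" using pf_dom eig[OF r(1)] unfolding Ac_def l1_def by blast
  qed
  have ep: "e p = 0" using echain[OF p(1)] puniq p by (metis n_not_Suc_n)
  have dnl: "\<And>r. r < n \<Longrightarrow> r \<noteq> p \<Longrightarrow> d r \<noteq> l1" using puniq by blast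
  have chain_ne: "\<And>r. r < n \<Longrightarrow> r \<noteq> p \<Longrightarrow> e r \<noteq> 0 \<Longrightarrow> Suc r < n \<and> Suc r \<noteq> p"
    using echain dnl p by metis
  have Aw: "\<And>w. w \<in> carrier_vec n \<Longrightarrow> Ac *\<^sub>v w = P *\<^sub>v (J *\<^sub>v (Qi *\<^sub>v w))"
    unfolding AJ using assoc_mult_mat_vec[of "P*J" n n Qi n] assoc_mult_mat_vec[of P n n J n] Pc Jc Qic
    by simp
  have QPw: "\<And>w. w \<in> carrier_vec n \<Longrightarrow> Qi *\<^sub>v (P *\<^sub>v w) = w"
    using assoc_mult_mat_vec[of Qi n n P n] QP Pc Qic by (metis one_mult_mat_vec)
  have PQw: "\<And>w. w \<in> carrier_vec n \<Longrightarrow> P *\<^sub>v (Qi *\<^sub>v w) = w"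
    using assoc_mult_mat_vec[of P n n Qi n] PQ Pc Qic by (metis one_mult_mat_vec)
  define uc where "uc = vec n (\<lambda>i. complex_of_real (u $ i))"
  have ucc: "uc \<in> carrier_vec n" unfolding uc_def by simp
  have ud: "dim_vec u = n" using u_dim unfolding n_def by simp
  have Auc: "Ac *\<^sub>v uc = l1 \<cdot>\<^sub>v uc"
  proof (rule eq_vecI)
    fix i assume "i < dim_vec (l1 \<cdot>\<^sub>v uc)"
    hence i: "i < n" unfolding uc_def by simp
    have "(Ac *\<^sub>v uc) $ i = (\<Sum>j\<in>{0..<n}. Ac $$ (i,j) * uc $ j)" by (rule mv_sum[OF Acc ucc i])
    also have "\<dots> = (\<Sum>j\<in>{0..<n}. complex_of_real (Q $$ (i,j) * u $ j))"
      by (rule sum.cong) (auto simp: Acij i uc_def)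
    also have "\<dots> = complex_of_real ((Q *\<^sub>v u) $ i)"
      using i Qc ud by (simp add: scalar_prod_def)
    also have "\<dots> = l1 * uc $ i" using u_eig i ud by (simp add: uc_def l1_def)
    finally show "(Ac *\<^sub>v uc) $ i = (l1 \<cdot>\<^sub>v uc) $ i" using i by (simp add: uc_def)
  qed (use Acc in \<open>simp add: uc_def\<close>)
  define v where "v = Qi *\<^sub>v uc"
  have vc: "v \<in> carrier_vec n" using Qic ucc unfolding v_def by simp
  have Jv: "J *\<^sub>v v = l1 \<cdot>\<^sub>v v"
  proof -
    have "J *\<^sub>v v = Qi *\<^sub>v (P *\<^sub>v (J *\<^sub>v (Qi *\<^sub>v uc)))"
      unfolding v_def using QPw Jc Qic ucc by simp
    also have "\<dots> = Qi *\<^sub>v (Ac *\<^sub>v uc)" using Aw[OF ucc] by simp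
    also have "\<dots> = l1 \<cdot>\<^sub>v v" unfolding Auc v_def by (rule mult_mat_vec[OF Qic ucc])
    finally show ?thesis .
  qed
  have Jvr: "\<And>r. r < n \<Longrightarrow> d r * v $ r + e r * v $ (Suc r) = l1 * v $ r"
  proof -
    fix r assume r: "r < n"
    have "d r * v $ r + e r * v $ (Suc r) = (\<Sum>s\<in>{0..<n}. J $$ (r,s) * v $ s)" using bsum[OF r] by simp
    also have "\<dots> = (J *\<^sub>v v) $ r" using mv_sum[OF Jc vc r] by simp
    also have "\<dots> = l1 * v $ r" unfolding Jv using r vc by simp
    finally show "d r * v $ r + e r * v $ (Suc r) = l1 * v $ r" .
  qed
  have vzero: "\<And>r. r < n \<Longrightarrow> r \<noteq> p \<Longrightarrow> v $ r = 0"
  proof -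
    fix r0 assume r0: "r0 < n" "r0 \<noteq> p"
    show "v $ r0 = 0"
    proof (rule down_induct[where P = "\<lambda>r. v $ r = 0" and n = n and p = p, OF _ r0])
      fix r assume r: "r < n" "r \<noteq> p" and IH: "Suc r < n \<Longrightarrow> Suc r \<noteq> p \<Longrightarrow> v $ Suc r = 0"
      have "e r * v $ (Suc r) = 0"
      proof (cases "e r = 0")
        case False
        from chain_ne[OF r False] IH show ?thesis by simp
      qed simp
      with Jvr[OF r(1)] have "(d r - l1) * v $ r = 0" by (simp add: algebra_simps)
      with dnl[OF r] show "v $ r = 0" by simp
    qed
  qed
  have ucP: "\<And>i. i < n \<Longrightarrow> uc $ i = P $$ (i,p) * v $ p"
  proof -
    fix i assume i: "i < n"
    have "uc $ i = (P *\<^sub>v v) $ i" unfolding v_def using PQw[OF ucc] by simp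
    also have "\<dots> = (\<Sum>s\<in>{0..<n}. P $$ (i,s) * v $ s)" by (rule mv_sum[OF Pc vc i])
    also have "\<dots> = (\<Sum>s\<in>{0..<n}. if s = p then P $$ (i,p) * v $ p else 0)"
      by (rule sum.cong) (auto simp: vzero)
    also have "\<dots> = P $$ (i,p) * v $ p" using p by simp
    finally show "uc $ i = P $$ (i,p) * v $ p" .
  qed
  have usum: "(\<Sum>i\<in>{0..<n}. uc $ i) = 1"
  proof -
    have "(\<Sum>i\<in>{0..<n}. uc $ i) = complex_of_real (\<Sum>i\<le>m. u $ i)"
      unfolding sumconv uc_def by simp
    thus ?thesis using u_norm by simp
  qed
  have vp: "v $ p \<noteq> 0"
  proof
    assume "v $ p = 0"
    hence "(\<Sum>i\<in>{0..<n}. uc $ i) = 0" using ucP by simp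
    with usum show False by simp
  qed
  define X where "X = (\<lambda>t. vec n (\<lambda>i. complex_of_real (x t i)))"
  have Xc: "\<And>t. X t \<in> carrier_vec n" unfolding X_def by simp
  define y where "y = (\<lambda>t r. \<Sum>i\<in>{0..<n}. Qi $$ (r,i) * complex_of_real (x t i))"
  have yX: "\<And>t r. r < n \<Longrightarrow> y t r = (Qi *\<^sub>v X t) $ r"
    unfolding y_def using mv_sum[OF Qic Xc] by (simp add: X_def)
  have Xy: "\<And>t i. i < n \<Longrightarrow> complex_of_real (x t i) = (\<Sum>r\<in>{0..<n}. P $$ (i,r) * y t r)"
  proof -
    fix t :: real and i assume i: "i < n"
    have "complex_of_real (x t i) = (P *\<^sub>v (Qi *\<^sub>v X t)) $ i" using PQw[OF Xc] i by (simp add: X_def)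
    also have "\<dots> = (\<Sum>r\<in>{0..<n}. P $$ (i,r) * (Qi *\<^sub>v X t) $ r)"
      by (rule mv_sum[OF Pc _ i]) (use Qic Xc in simp)
    also have "\<dots> = (\<Sum>r\<in>{0..<n}. P $$ (i,r) * y t r)" by (rule sum.cong) (auto simp: yX)
    finally show "complex_of_real (x t i) = (\<Sum>r\<in>{0..<n}. P $$ (i,r) * y t r)" .
  qed
  define \<phi> where "\<phi> = (\<lambda>t. \<Sum>k\<le>m. \<Sum>j\<le>m. Q $$ (k,j) * x t j)"
  define K\<phi> where "K\<phi> = (\<Sum>k\<le>m. \<Sum>j\<le>m. \<bar>Q $$ (k,j)\<bar>)"
  have xb: "\<And>t j. t \<ge> 0 \<Longrightarrow> j \<le> m \<Longrightarrow> 0 \<le> x t j \<and> x t j \<le> 1"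
  proof -
    fix t :: real and j assume t: "t \<ge> 0" and j: "j \<le> m"
    from simplex[OF t] have nn: "\<forall>i\<le>m. x t i \<ge> 0" and s1: "(\<Sum>i\<le>m. x t i) = 1" by auto
    have "x t j \<le> (\<Sum>i\<le>m. x t i)" by (rule member_le_sum) (use nn j in auto)
    thus "0 \<le> x t j \<and> x t j \<le> 1" using s1 nn j by auto
  qed
  have \<phi>b: "\<And>t. t \<ge> 0 \<Longrightarrow> \<bar>\<phi> t\<bar> \<le> K\<phi>"
  proof -
    fix t :: real assume t: "t \<ge> 0"
    have "\<bar>\<phi> t\<bar> \<le> (\<Sum>k\<le>m. \<bar>\<Sum>j\<le>m. Q $$ (k,j) * x t j\<bar>)" unfolding \<phi>_def by (rule sum_abs)
    also have "\<dots> \<le> (\<Sum>k\<le>m. \<Sum>j\<le>m. \<bar>Q $$ (k,j) * x t j\<bar>)" by (intro sum_mono sum_abs)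
    also have "\<dots> \<le> K\<phi>" unfolding K\<phi>_def
    proof (intro sum_mono)
      fix k j assume "j \<in> {..m}"
      hence "0 \<le> x t j \<and> x t j \<le> 1" using xb[OF t] by simp
      thus "\<bar>Q $$ (k,j) * x t j\<bar> \<le> \<bar>Q $$ (k,j)\<bar>" by (simp add: abs_mult mult_left_le)
    qed
    finally show "\<bar>\<phi> t\<bar> \<le> K\<phi>" .
  qed
  have AX: "\<And>t i. i < n \<Longrightarrow> (Ac *\<^sub>v X t) $ i = complex_of_real (\<Sum>j\<le>m. Q $$ (i,j) * x t j)"
  proof -
    fix t :: real and i assume i: "i < n"
    have "(Ac *\<^sub>v X t) $ i = (\<Sum>j\<in>{0..<n}. Ac $$ (i,j) * X t $ j)" by (rule mv_sum[OF Acc Xc i])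
    also have "\<dots> = (\<Sum>j\<in>{0..<n}. complex_of_real (Q $$ (i,j) * x t j))"
      by (rule sum.cong) (auto simp: Acij i X_def)
    finally show "(Ac *\<^sub>v X t) $ i = complex_of_real (\<Sum>j\<le>m. Q $$ (i,j) * x t j)"
      unfolding sumconv by simp
  qed
  have dX: "\<And>t i. t \<ge> 0 \<Longrightarrow> i < n \<Longrightarrow> ((\<lambda>s. complex_of_real (x s i)) has_vector_derivative
        complex_of_real ((\<Sum>j\<le>m. Q $$ (i,j) * x t j) - x t i * \<phi> t)) (at t within {0..})"
    by (rule has_vector_derivative_of_real) (use ode in \<open>auto simp: \<phi>_def n_def\<close>)
  have dy: "\<And>t r. t \<ge> 0 \<Longrightarrow> r < n \<Longrightarrow> ((\<lambda>s. y s r) has_vector_derivative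
       (d r * y t r + e r * y t (Suc r) - complex_of_real (\<phi> t) * y t r)) (at t within {0..})"
  proof -
    fix t :: real and r assume t: "t \<ge> 0" and r: "r < n"
    have "((\<lambda>s. y s r) has_vector_derivative (\<Sum>i\<in>{0..<n}. Qi $$ (r,i) *
        complex_of_real ((\<Sum>j\<le>m. Q $$ (i,j) * x t j) - x t i * \<phi> t))) (at t within {0..})"
      unfolding y_def by (intro has_vector_derivative_sum has_vector_derivative_mult_right dX[OF t]) auto
    moreover have "(\<Sum>i\<in>{0..<n}. Qi $$ (r,i) * complex_of_real ((\<Sum>j\<le>m. Q $$ (i,j) * x t j) - x t i * \<phi> t))
        = d r * y t r + e r * y t (Suc r) - complex_of_real (\<phi> t) * y t r"
    proof -
      have "(\<Sum>i\<in>{0..<n}. Qi $$ (r,i) * complex_of_real ((\<Sum>j\<le>m. Q $$ (i,j) * x t j) - x t i * \<phi> t))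
          = (\<Sum>i\<in>{0..<n}. Qi $$ (r,i) * (Ac *\<^sub>v X t) $ i) - complex_of_real (\<phi> t) * y t r"
        unfolding y_def sum_subtractf[symmetric] sum_distrib_left
        by (rule sum.cong) (auto simp: AX algebra_simps)
      also have "(\<Sum>i\<in>{0..<n}. Qi $$ (r,i) * (Ac *\<^sub>v X t) $ i) = (Qi *\<^sub>v (Ac *\<^sub>v X t)) $ r"
        by (rule mv_sum[OF Qic _ r, symmetric]) (use Acc Xc in simp)
      also have "\<dots> = (J *\<^sub>v (Qi *\<^sub>v X t)) $ r"
        using Aw[OF Xc] QPw Jc Qic Xc by simp
      also have "\<dots> = (\<Sum>s\<in>{0..<n}. J $$ (r,s) * (Qi *\<^sub>v X t) $ s)"
        by (rule mv_sum[OF Jc _ r]) (use Qic Xc in simp)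
      also have "\<dots> = (\<Sum>s\<in>{0..<n}. J $$ (r,s) * y t s)" by (rule sum.cong) (auto simp: yX)
      also have "\<dots> = d r * y t r + e r * y t (Suc r)" by (rule bsum[OF r])
      finally show ?thesis .
    qed
    ultimately show "((\<lambda>s. y s r) has_vector_derivative
       (d r * y t r + e r * y t (Suc r) - complex_of_real (\<phi> t) * y t r)) (at t within {0..})" by simp
  qed
  have P0: "P *\<^sub>v 0\<^sub>v n = 0\<^sub>v n"
  proof (rule eq_vecI)
    fix i assume "i < dim_vec (0\<^sub>v n :: complex vec)"
    hence i: "i < n" by simp
    show "(P *\<^sub>v 0\<^sub>v n) $ i = 0\<^sub>v n $ i" using mv_sum[OF Pc _ i, of "0\<^sub>v n"] i by simp
  qed (use Pc in simp)
  have y0p: "y 0 p \<noteq> 0"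
  proof
    assume y0: "y 0 p = 0"
    define z where "z = (\<lambda>\<mu>. vec n (\<lambda>s. if d s = \<mu> then y 0 s else 0))"
    define w where "w = (\<lambda>\<mu>. P *\<^sub>v z \<mu>)"
    have zc: "\<And>\<mu>. z \<mu> \<in> carrier_vec n" unfolding z_def by simp
    have dimA: "dim_row Ac = n" using Acc by simp
    have gen: "\<forall>\<mu>\<in>Collect (eigenvalue Ac). w \<mu> \<in> gen_eigenspace Ac \<mu>"
    proof
      fix \<mu> assume "\<mu> \<in> Collect (eigenvalue Ac)"
      have wc: "w \<mu> \<in> carrier_vec n" unfolding w_def using Pc zc by simp
      have Mc: "char_matrix J \<mu> ^\<^sub>m n \<in> carrier_mat n n" using Jc by simp
      have nil: "(char_matrix J \<mu> ^\<^sub>m n) *\<^sub>v z \<mu> = 0\<^sub>v n"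
      proof (rule eq_vecI)
        fix s assume "s < dim_vec (0\<^sub>v n :: complex vec)"
        hence s: "s < n" by simp
        show "((char_matrix J \<mu> ^\<^sub>m n) *\<^sub>v z \<mu>) $ s = 0\<^sub>v n $ s"
        proof (rule ccontr)
          assume "((char_matrix J \<mu> ^\<^sub>m n) *\<^sub>v z \<mu>) $ s \<noteq> 0\<^sub>v n $ s"
          hence nz: "((char_matrix J \<mu> ^\<^sub>m n) *\<^sub>v z \<mu>) $ s \<noteq> 0" using s by simp
          have supp: "\<forall>s<n. z \<mu> $ s \<noteq> 0 \<longrightarrow> J$$(s,s) = \<mu> \<and> s < n"
            by (auto simp: z_def d_def split: if_splits)
          from nil_support[OF Jc BD zc supp s nz] show False by simp
        qed
      qed (use char_matrix_closed[OF Jc, of \<mu>] in simp)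
      have CA: "char_matrix Ac \<mu> ^\<^sub>m n = P * (char_matrix J \<mu> ^\<^sub>m n) * Qi"
        by (rule similar_mat_wit_pow_id[OF similar_mat_wit_char_matrix'[OF wit]])
      have "(char_matrix Ac \<mu> ^\<^sub>m n) *\<^sub>v w \<mu> = P *\<^sub>v ((char_matrix J \<mu> ^\<^sub>m n) *\<^sub>v (Qi *\<^sub>v (P *\<^sub>v z \<mu>)))"
        unfolding CA w_def
        using assoc_mult_mat_vec[of "P * (char_matrix J \<mu> ^\<^sub>m n)" n n Qi n "P *\<^sub>v z \<mu>"]
          assoc_mult_mat_vec[of P n n "char_matrix J \<mu> ^\<^sub>m n" n "Qi *\<^sub>v (P *\<^sub>v z \<mu>)"] Pc Mc Qic zc
        by simp
      also have "\<dots> = 0\<^sub>v n" using QPw[OF zc] nil P0 by simp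
      finally show "w \<mu> \<in> gen_eigenspace Ac \<mu>" unfolding gen_eigenspace_def dimA using wc by simp
    qed
    have fin: "finite (Collect (eigenvalue Ac))"
    proof -
      have "Collect (eigenvalue Ac) = {x. poly (char_poly Ac) x = 0}"
        using eigenvalue_root_char_poly[OF Acc] by auto
      moreover have "char_poly Ac \<noteq> 0" using degree_monic_char_poly[OF Acc] by auto
      ultimately show ?thesis using poly_roots_finite by simp
    qed
    have sumw: "\<forall>i<dim_row Ac. (\<Sum>\<mu>\<in>Collect (eigenvalue Ac). w \<mu> $ i) = vec (m+1) (\<lambda>i. complex_of_real (x 0 i)) $ i"
    proof (intro allI impI)
      fix i assume "i < dim_row Ac"
      hence i: "i < n" using dimA by simp
      have wi: "\<And>\<mu>. w \<mu> $ i = (\<Sum>s\<in>{0..<n}. P $$ (i,s) * (if d s = \<mu> then y 0 s else 0))"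
        unfolding w_def using mv_sum[OF Pc zc i] by (auto simp: z_def intro!: sum.cong)
      have inner: "\<And>s. s \<in> {0..<n} \<Longrightarrow> (\<Sum>\<mu>\<in>Collect (eigenvalue Ac). P $$ (i,s) * (if d s = \<mu> then y 0 s else 0)) = P $$ (i,s) * y 0 s"
      proof -
        fix s assume "s \<in> {0..<n}"
        hence s: "s < n" by simp
        have "(\<Sum>\<mu>\<in>Collect (eigenvalue Ac). P $$ (i,s) * (if d s = \<mu> then y 0 s else 0)) =
            P $$ (i,s) * (\<Sum>\<mu>\<in>Collect (eigenvalue Ac). if d s = \<mu> then y 0 s else 0)"
          by (simp add: sum_distrib_left)
        also have "\<dots> = P $$ (i,s) * y 0 s" using fin eig[OF s] by simp
        finally show "(\<Sum>\<mu>\<in>Collect (eigenvalue Ac). P $$ (i,s) * (if d s = \<mu> then y 0 s else 0)) = P $$ (i,s) * y 0 s" .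
      qed
      have "(\<Sum>\<mu>\<in>Collect (eigenvalue Ac). w \<mu> $ i) =
          (\<Sum>\<mu>\<in>Collect (eigenvalue Ac). \<Sum>s\<in>{0..<n}. P $$ (i,s) * (if d s = \<mu> then y 0 s else 0))"
        using wi by simp
      also have "\<dots> = (\<Sum>s\<in>{0..<n}. \<Sum>\<mu>\<in>Collect (eigenvalue Ac). P $$ (i,s) * (if d s = \<mu> then y 0 s else 0))"
        by (rule sum.swap)
      also have "\<dots> = (\<Sum>s\<in>{0..<n}. P $$ (i,s) * y 0 s)" using inner by (rule sum.cong[OF refl])
      also have "\<dots> = complex_of_real (x 0 i)" using Xy[OF i] by simp
      also have "\<dots> = vec (m+1) (\<lambda>i. complex_of_real (x 0 i)) $ i" using i unfolding n_def by simp
      finally show "(\<Sum>\<mu>\<in>Collect (eigenvalue Ac). w \<mu> $ i) = vec (m+1) (\<lambda>i. complex_of_real (x 0 i)) $ i" .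
    qed
    have init': "nonzero_gen_component Ac l1 (vec (m+1) (\<lambda>i. complex_of_real (x 0 i)))"
      using init unfolding Ac_def l1_def .
    have "w l1 \<noteq> 0\<^sub>v (dim_row Ac)"
      using init'[unfolded nonzero_gen_component_def, THEN spec[of _ w]] gen sumw by blast
    moreover have "z l1 = 0\<^sub>v n"
      by (rule eq_vecI) (use y0 puniq in \<open>auto simp: z_def\<close>)
    ultimately show False using P0 dimA unfolding w_def by simp
  qed
  have ynz: "\<And>t. t \<ge> 0 \<Longrightarrow> y t p \<noteq> 0"
  proof -
    fix t :: real assume t: "t \<ge> 0"
    show "y t p \<noteq> 0"
    proof (rule nonvanish[where y = "\<lambda>s. y s p" and g = "\<lambda>s. lam1 - \<phi> s" and K = "\<bar>lam1\<bar> + K\<phi>", OF _ _ y0p t])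
      fix s :: real assume s: "s \<ge> 0"
      have "d p * y s p + e p * y s (Suc p) - complex_of_real (\<phi> s) * y s p = complex_of_real (lam1 - \<phi> s) * y s p"
        using p ep by (simp add: l1_def algebra_simps)
      with dy[OF s p(1)] show "((\<lambda>s. y s p) has_vector_derivative complex_of_real (lam1 - \<phi> s) * y s p) (at s within {0..})"
        by simp
      show "\<bar>lam1 - \<phi> s\<bar> \<le> \<bar>lam1\<bar> + K\<phi>" using \<phi>b[OF s] by linarith
    qed
  qed
  define q where "q = (\<lambda>t r. y t r / y t p)"
  have dyat: "\<And>t r. t > 0 \<Longrightarrow> r < n \<Longrightarrow> ((\<lambda>s. y s r) has_vector_derivative
       (d r * y t r + e r * y t (Suc r) - complex_of_real (\<phi> t) * y t r)) (at t)"
  proof -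
    fix t :: real and r assume t: "t > 0" and r: "r < n"
    have "at t within {0..} = at t" by (rule at_within_open_subset[of t "{0<..}"]) (use t in auto)
    with dy[OF _ r, of t] t show "((\<lambda>s. y s r) has_vector_derivative
       (d r * y t r + e r * y t (Suc r) - complex_of_real (\<phi> t) * y t r)) (at t)" by simp
  qed
  have dq: "\<And>t r. t > 0 \<Longrightarrow> r < n \<Longrightarrow> ((\<lambda>s. q s r) has_vector_derivative ((d r - l1) * q t r + e r * q t (Suc r))) (at t)"
  proof -
    fix t :: real and r assume t: "t > 0" and r: "r < n"
    have yp: "y t p \<noteq> 0" using ynz t by simp
    have "((\<lambda>s. y s r / y s p) has_vector_derivative
       (((d r * y t r + e r * y t (Suc r) - complex_of_real (\<phi> t) * y t r) * y t p -
          y t r * (d p * y t p + e p * y t (Suc p) - complex_of_real (\<phi> t) * y t p)) / (y t p)\<^sup>2)) (at t)"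
      by (rule quot_deriv[OF dyat[OF t r] dyat[OF t p(1)] yp])
    moreover have "((d r * y t r + e r * y t (Suc r) - complex_of_real (\<phi> t) * y t r) * y t p -
          y t r * (d p * y t p + e p * y t (Suc p) - complex_of_real (\<phi> t) * y t p)) / (y t p)\<^sup>2
        = (d r - l1) * q t r + e r * q t (Suc r)"
      using yp p ep unfolding q_def by (simp add: field_simps power2_eq_square)
    ultimately show "((\<lambda>s. q s r) has_vector_derivative ((d r - l1) * q t r + e r * q t (Suc r))) (at t)"
      unfolding q_def by simp
  qed
  have qlim: "\<And>r. r < n \<Longrightarrow> r \<noteq> p \<Longrightarrow> ((\<lambda>t. q t r) \<longlongrightarrow> 0) at_top"
  proof -
    fix r0 assume r0: "r0 < n" "r0 \<noteq> p"
    show "((\<lambda>t. q t r0) \<longlongrightarrow> 0) at_top"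
    proof (rule down_induct[where P = "\<lambda>r. ((\<lambda>t. q t r) \<longlongrightarrow> 0) at_top" and n = n and p = p, OF _ r0])
      fix r assume r: "r < n" "r \<noteq> p" and IH: "Suc r < n \<Longrightarrow> Suc r \<noteq> p \<Longrightarrow> ((\<lambda>t. q t (Suc r)) \<longlongrightarrow> 0) at_top"
      have fl: "((\<lambda>t. e r * q t (Suc r)) \<longlongrightarrow> 0) at_top"
      proof (cases "e r = 0")
        case False
        from chain_ne[OF r False] IH have "((\<lambda>t. q t (Suc r)) \<longlongrightarrow> 0) at_top" by simp
        thus ?thesis by (rule tendsto_mult_right_zero)
      qed simp
      have der: "\<And>t. 0 < t \<Longrightarrow> ((\<lambda>t. q t r) has_vector_derivative ((d r - l1) * q t r + e r * q t (Suc r))) (at t)"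
        using dq r by auto
      have ra: "Re (d r - l1) < 0" using Rdom[OF r] unfolding l1_def by simp
      show "((\<lambda>t. q t r) \<longlongrightarrow> 0) at_top"
        by (rule decay[OF ra der fl])
    qed
  qed
  define S where "S = (\<lambda>i t. \<Sum>r\<in>{0..<n}-{p}. P $$ (i,r) * q t r)"
  have E1: "\<And>t i. t > 0 \<Longrightarrow> i < n \<Longrightarrow> complex_of_real (x t i) = (y t p / v $ p) * (uc $ i + v $ p * S i t)"
  proof -
    fix t :: real and i assume t: "t > 0" and i: "i < n"
    have yp: "y t p \<noteq> 0" using ynz t by simp
    have "complex_of_real (x t i) = (\<Sum>r\<in>{0..<n}. P $$ (i,r) * (y t p * q t r))"
      unfolding Xy[OF i] by (rule sum.cong) (auto simp: q_def yp)
    also have "\<dots> = y t p * (\<Sum>r\<in>{0..<n}. P $$ (i,r) * q t r)" by (simp add: sum_distrib_left algebra_simps)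
    also have "(\<Sum>r\<in>{0..<n}. P $$ (i,r) * q t r) = P $$ (i,p) * q t p + S i t"
      using sum.remove[of "{0..<n}" p "\<lambda>r. P $$ (i,r) * q t r"] p(1) by (simp add: S_def)
    finally have "complex_of_real (x t i) = y t p * (P $$ (i,p) * q t p + S i t)" .
    moreover have "q t p = 1" using yp unfolding q_def by simp
    moreover have "uc $ i = P $$ (i,p) * v $ p" using ucP[OF i] .
    ultimately show "complex_of_real (x t i) = (y t p / v $ p) * (uc $ i + v $ p * S i t)"
      using vp by (simp add: field_simps)
  qed
  define Ei where "Ei = (\<lambda>i t. uc $ i + v $ p * S i t)"
  define F where "F = (\<lambda>t. \<Sum>i\<in>{0..<n}. Ei i t)"
  have Slim: "\<And>i. ((\<lambda>t. S i t) \<longlongrightarrow> 0) at_top"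
    unfolding S_def by (intro tendsto_null_sum tendsto_mult_right_zero qlim) auto
  have Elim: "\<And>i. ((\<lambda>t. Ei i t) \<longlongrightarrow> uc $ i) at_top"
    unfolding Ei_def using tendsto_add[OF tendsto_const tendsto_mult_right_zero[OF Slim]] by simp
  have Flim: "(F \<longlongrightarrow> 1) at_top"
    unfolding F_def usum[symmetric] by (intro tendsto_sum Elim)
  have key: "\<And>t i. t > 0 \<Longrightarrow> i < n \<Longrightarrow> complex_of_real (x t i) = Ei i t / F t"
  proof -
    fix t :: real and i assume t: "t > 0" and i: "i < n"
    have h: "\<And>i. i < n \<Longrightarrow> complex_of_real (x t i) = (y t p / v $ p) * Ei i t"
      using E1[OF t] unfolding Ei_def by simp
    have "1 = complex_of_real (\<Sum>i\<le>m. x t i)" using simplex[of t] t by simp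
    also have "\<dots> = (\<Sum>i\<in>{0..<n}. complex_of_real (x t i))" unfolding sumconv by simp
    also have "\<dots> = (y t p / v $ p) * F t" unfolding F_def sum_distrib_left by (rule sum.cong) (auto simp: h)
    finally have hF: "(y t p / v $ p) * F t = 1" by simp
    hence Fn: "F t \<noteq> 0" by auto
    have "y t p / v $ p = 1 / F t" using hF Fn by (simp add: field_simps)
    thus "complex_of_real (x t i) = Ei i t / F t" using h[OF i] by simp
  qed
  show ?thesis
  proof (intro allI impI)
    fix i assume i: "i \<le> m"
    hence i': "i < n" unfolding n_def by simp
    have "((\<lambda>t. Ei i t / F t) \<longlongrightarrow> uc $ i / 1) at_top" by (intro tendsto_divide Elim Flim) simp
    moreover have "eventually (\<lambda>t. Ei i t / F t = complex_of_real (x t i)) at_top"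
      using eventually_gt_at_top[of 0] by eventually_elim (simp add: key[OF _ i'])
    ultimately have "((\<lambda>t. complex_of_real (x t i)) \<longlongrightarrow> uc $ i) at_top"
      using tendsto_cong by fastforce
    from tendsto_Re[OF this] show "((\<lambda>t. x t i) \<longlongrightarrow> u $ i) at_top" using i' by (simp add: uc_def)
  qed
qed


end
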